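(* Let $p$ be an odd prime. Then $$2\sum_{k=(p+1)/2}^{[3p/4]}\binom{4k}{2k}\frac1{32^k}\equiv-4\sum_{k=1}^{[\frac{p+1}4]}\binom{4k-2}{2k-1}\frac1{32^k}\equiv\begin{cases}0\pmod p&\text{if }p\equiv\pm1\pmod8,\\1\pmod p&\text{if }p\equiv\pm5\pmod{16},\\-1\pmod p&\text{if }p\equiv\pm3\pmod{16}.\end{cases}$$
   Context: $[x]$ is the greatest integer $\le x$. *)

theory Defs
  imports Complex_Main "HOL-Computational_Algebra.Primes"
begin

text \<open>Congruence of rationals modulo a prime p: a - b = p*m/n with n an integer not divisible by p
  (i.e. a - b lies in p times the ring of p-integral rationals).\<close>
definition qcong :: "rat \<Rightarrow> rat \<Rightarrow> nat \<Rightarrow> bool" where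
  "qcong a b p \<longleftrightarrow> (\<exists>m n::int. n \<noteq> 0 \<and> \<not> (int p dvd n) \<and> a - b = of_int (int p * m) / of_int n)"

end

theory Submission imports Defs "HOL-Computational_Algebra.Polynomial" "HOL-Number_Theory.Cong"
begin

lemma frob:
  fixes a b :: "'a::comm_ring_1"
  assumes "prime p"
  shows "\<exists>h. (a+b)^p = a^p + b^p + of_nat p * h"
proof -
  have p0: "p > 0" using assms prime_gt_0_nat by blast
  have "(a + b) ^ p = (\<Sum>k\<le>p. of_nat (p choose k) * a ^ k * b ^ (p - k))"
    by (rule binomial_ring)
  also have "{..p} = insert 0 (insert p {1..<p})" using p0 by auto
  also have "(\<Sum>k\<in>insert 0 (insert p {1..<p}). of_nat (p choose k) * a ^ k * b ^ (p - k))
     = b^p + a^p + (\<Sum>k\<in>{1..<p}. of_nat (p choose k) * a ^ k * b ^ (p - k))"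
    using p0 by simp
  also have "(\<Sum>k\<in>{1..<p}. of_nat (p choose k) * a ^ k * b ^ (p - k))
     = of_nat p * (\<Sum>k\<in>{1..<p}. of_nat ((p choose k) div p) * a ^ k * b ^ (p - k))"
  proof -
    have "\<And>k. k \<in> {1..<p} \<Longrightarrow> of_nat (p choose k) * a ^ k * b ^ (p - k)
        = of_nat p * (of_nat ((p choose k) div p) * a ^ k * b ^ (p - k))"
    proof -
      fix k assume k: "k \<in> {1..<p}"
      have "p dvd (p choose k)" using k assms by (intro dvd_choose_prime) auto
      then have e: "p choose k = p * ((p choose k) div p)" by simp
      show "of_nat (p choose k) * a ^ k * b ^ (p - k)
        = of_nat p * (of_nat ((p choose k) div p) * a ^ k * b ^ (p - k))"
        by (subst e) (simp only: of_nat_mult mult_ac)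
    qed
    then show ?thesis by (simp add: sum_distrib_left)
  qed
  finally show ?thesis by (auto simp: add_ac)
qed


definition Xp :: "int poly" where "Xp = monom 1 1"

lemma Xp_pow: "Xp ^ i = monom 1 i"
  by (simp add: Xp_def monom_power)

definition cg :: "nat \<Rightarrow> int poly \<Rightarrow> int poly \<Rightarrow> bool" where
  "cg p f g \<longleftrightarrow> (\<exists>h k. f - g = of_nat p * h + (Xp^8+1) * k)"

lemma cg_refl[simp]: "cg p f f"
  unfolding cg_def by (rule exI[of _ 0], rule exI[of _ 0]) simp

lemma cg_sym: "cg p f g \<Longrightarrow> cg p g f"
  unfolding cg_def
  by (metis (no_types, opaque_lifting) add_uminus_conv_diff minus_add_distrib minus_diff_eq mult_minus_right)

lemma cg_trans: "cg p f g \<Longrightarrow> cg p g h \<Longrightarrow> cg p f h"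
proof -
  assume "cg p f g" "cg p g h"
  then obtain a b c d where "f - g = of_nat p * a + (Xp^8+1) * b" "g - h = of_nat p * c + (Xp^8+1) * d"
    unfolding cg_def by blast
  then have "f - h = of_nat p * (a + c) + (Xp^8+1) * (b + d)" by (simp add: algebra_simps)
  then show ?thesis unfolding cg_def by blast
qed

lemma cg_add: "cg p a b \<Longrightarrow> cg p c d \<Longrightarrow> cg p (a + c) (b + d)"
proof -
  assume "cg p a b" "cg p c d"
  then obtain h1 k1 h2 k2 where "a - b = of_nat p * h1 + (Xp^8+1) * k1" "c - d = of_nat p * h2 + (Xp^8+1) * k2"
    unfolding cg_def by blast
  then have "(a + c) - (b + d) = of_nat p * (h1 + h2) + (Xp^8+1) * (k1 + k2)" by (simp add: algebra_simps)
  then show ?thesis unfolding cg_def by blast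
qed

lemma cg_uminus: "cg p a b \<Longrightarrow> cg p (-a) (-b)"
proof -
  assume "cg p a b"
  then obtain h1 k1 where "a - b = of_nat p * h1 + (Xp^8+1) * k1"
    unfolding cg_def by blast
  then have "(-a) - (-b) = of_nat p * (-h1) + (Xp^8+1) * (-k1)" by (simp add: algebra_simps)
  then show ?thesis unfolding cg_def by blast
qed

lemma cg_diff: "cg p a b \<Longrightarrow> cg p c d \<Longrightarrow> cg p (a - c) (b - d)"
  using cg_add[of p a b "-c" "-d"] cg_uminus by simp

lemma cg_mult_left: "cg p a b \<Longrightarrow> cg p (c * a) (c * b)"
proof -
  assume "cg p a b"
  then obtain h1 k1 where "a - b = of_nat p * h1 + (Xp^8+1) * k1"
    unfolding cg_def by blast
  then have "c * a - c * b = of_nat p * (c * h1) + (Xp^8+1) * (c * k1)"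
    by (metis (no_types, lifting) distrib_left mult.left_commute right_diff_distrib)
  then show ?thesis unfolding cg_def by blast
qed

lemma cg_mult: "cg p a b \<Longrightarrow> cg p c d \<Longrightarrow> cg p (a * c) (b * d)"
  by (metis cg_mult_left cg_trans mult.commute)

lemma cg_pow: "cg p a b \<Longrightarrow> cg p (a ^ n) (b ^ n)"
  by (induction n) (auto intro: cg_mult)

lemma cg_sum: "(\<And>i. i \<in> A \<Longrightarrow> cg p (f i) (g i)) \<Longrightarrow> cg p (\<Sum>i\<in>A. f i) (\<Sum>i\<in>A. g i)"
  by (induction A rule: infinite_finite_induct) (auto intro: cg_add)

lemma cg_idealI: "f - g = (Xp^8+1) * k \<Longrightarrow> cg p f g"
  unfolding cg_def by (rule exI[of _ 0]) auto

lemma cg_pI: "f - g = of_nat p * h \<Longrightarrow> cg p f g"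
  unfolding cg_def by (rule exI[of _ h], rule exI[of _ 0]) auto

lemma cg_X16: "cg p (Xp ^ (16 * q + r)) (Xp ^ r)"
proof (induction q)
  case 0 then show ?case by simp
next
  case (Suc q)
  have "cg p (Xp ^ 16) 1"
    by (rule cg_idealI[of _ _ "Xp^8 - 1"]) (simp add: algebra_simps flip: power_add)
  then have "cg p (Xp ^ 16 * Xp ^ (16 * q + r)) (1 * Xp ^ r)"
    using Suc cg_mult by blast
  then show ?case by (simp add: power_add mult.assoc)
qed

lemma cg_Xmod: "cg p (Xp ^ a) (Xp ^ (a mod 16))"
  using cg_X16[of p "a div 16" "a mod 16"] by simp

definition ee :: "nat \<Rightarrow> int" where
  "ee i = (if i mod 16 = 2 then 1 else if i mod 16 = 10 then -1 else 0)"

definition LL :: "int poly \<Rightarrow> int" where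
  "LL f = (\<Sum>i\<le>degree f. coeff f i * ee i)"

lemma LL_bound: "degree f \<le> N \<Longrightarrow> LL f = (\<Sum>i\<le>N. coeff f i * ee i)"
  unfolding LL_def
  by (rule sum.mono_neutral_left) (auto simp: coeff_eq_0)

lemma LL_add: "LL (f + g) = LL f + LL g"
proof -
  define N where "N = max (degree f) (degree g)"
  have "degree (f + g) \<le> N" unfolding N_def by (rule degree_add_le) auto
  then show ?thesis
    using LL_bound[of "f+g" N] LL_bound[of f N] LL_bound[of g N]
    by (simp add: N_def sum.distrib algebra_simps)
qed

lemma LL_uminus: "LL (- f) = - LL f"
  unfolding LL_def by (simp add: sum_negf)

lemma LL_diff: "LL (f - g) = LL f - LL g"
  using LL_add[of f "-g"] LL_uminus[of g] by simp

lemma LL_0[simp]: "LL 0 = 0" by (simp add: LL_def)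

lemma LL_sum: "LL (\<Sum>i\<in>A. f i) = (\<Sum>i\<in>A. LL (f i))"
  by (induction A rule: infinite_finite_induct) (auto simp: LL_add)

lemma ee_shift: "ee (i+8) = - ee i"
proof -
  define r where "r = i mod 16"
  have r: "r < 16" by (simp add: r_def)
  have e: "(i+8) mod 16 = (r + 8) mod 16" by (simp add: mod_add_left_eq r_def)
  also have "\<dots> = (if r < 8 then r + 8 else r - 8)"
  proof (cases "r < 8")
    case True then show ?thesis by simp
  next
    case False
    define s where "s = r - 8"
    have rs: "r + 8 = s + 16" using False by (simp add: s_def)
    have "(r+8) mod 16 = (r - 8) mod 16" unfolding rs s_def[symmetric] by simp
    then show ?thesis using False r by simp
  qed
  finally have e2: "(i+8) mod 16 = (if r < 8 then r + 8 else r - 8)" .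
  show ?thesis unfolding ee_def e2 r_def[symmetric] using r
    by auto
qed

lemma LL_smult: "LL (smult c f) = c * LL f"
proof -
  have "degree (smult c f) \<le> degree f" by (rule degree_smult_le)
  then show ?thesis using LL_bound[of "smult c f" "degree f"]
    by (simp add: LL_def sum_distrib_left mult_ac)
qed

lemma LL_monom: "LL (monom c i) = c * ee i"
proof -
  have "LL (monom c i) = (\<Sum>j\<le>i. coeff (monom c i) j * ee j)"
    by (rule LL_bound) (simp add: degree_monom_le)
  also have "\<dots> = (\<Sum>j\<le>i. if i = j then c * ee j else 0)"
    by (rule sum.cong) (auto simp: coeff_monom)
  also have "\<dots> = c * ee i" by simp
  finally show ?thesis .
qed

lemma LL_ideal: "LL ((Xp^8+1) * k) = 0"
proof -
  have "(Xp^8+1) * k = (Xp^8+1) * (\<Sum>i\<le>degree k. monom (coeff k i) i)"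
    by (simp add: poly_as_sum_of_monoms)
  also have "\<dots> = (\<Sum>i\<le>degree k. monom (coeff k i) (i+8) + monom (coeff k i) i)"
    by (simp add: sum_distrib_left Xp_pow distrib_right mult_monom add.commute)
  finally have "LL ((Xp^8+1) * k) = (\<Sum>i\<le>degree k. coeff k i * (ee (i+8) + ee i))"
    by (simp add: LL_sum LL_add LL_monom algebra_simps)
  also have "\<dots> = 0"
    by (rule sum.neutral) (simp add: ee_shift)
  finally show ?thesis .
qed

lemma LL_ofnat: "LL (of_nat p * h) = int p * LL h"
  by (simp add: of_nat_poly LL_smult)

lemma cg_LL: "cg p f g \<Longrightarrow> [LL f = LL g] (mod int p)"
proof -
  assume "cg p f g"
  then obtain h k where "f - g = of_nat p * h + (Xp^8+1) * k" unfolding cg_def by blast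
  then have "LL f - LL g = int p * LL h"
    by (metis LL_add LL_diff LL_ideal LL_ofnat add.right_neutral)
  then show ?thesis
    by (metis cong_iff_dvd_diff cong_sym dvd_triv_left)
qed

lemma LL_Xpow: "LL (Xp ^ i) = ee i"
  by (simp add: Xp_pow LL_monom)

lemma LL_const: "LL [:c:] = 0"
  using LL_monom[of c 0] by (simp add: ee_def monom_0)

definition zz :: "int poly" where "zz = Xp - Xp^7"
definition ww :: "int poly" where "ww = Xp^2 - Xp^6"
definition c3 :: "int poly" where "c3 = Xp^3 - Xp^5"

lemma zz2: "cg p (zz^2) (2 + ww)"
  unfolding zz_def ww_def by (rule cg_idealI[of _ _ "Xp^6 - 2"]) algebra

lemma ww2: "cg p (ww^2) 2"
  unfolding ww_def by (rule cg_idealI[of _ _ "Xp^4 - 2"]) algebra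

lemma zM: "cg p (zz * (zz * ww * (ww - 1))) 2"
  unfolding zz_def ww_def
  by (rule cg_idealI[of _ _ "(- 2 * 1 - Xp^4 + Xp^6 + 3 * Xp^8 - Xp^12 - 2 * Xp^14 + Xp^18)"]) algebra

lemma c3M: "cg p (c3 * (zz * ww * (ww - 1))) (2 * ww - 2)"
  unfolding zz_def ww_def c3_def
  by (rule cg_idealI[of _ _ "(2 * 1 - 2 * Xp^2 + Xp^6 + 2 * Xp^10 - 2 * Xp^12 - Xp^14 + Xp^16)"]) algebra

lemma zr1: "cg p (Xp^1 - Xp^7) (zz)"
  unfolding zz_def c3_def by (rule cg_idealI[of _ _ "0"]) algebra

lemma zr3: "cg p (Xp^3 - Xp^5) (c3)"
  unfolding zz_def c3_def by (rule cg_idealI[of _ _ "0"]) algebra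

lemma zr5: "cg p (Xp^5 - Xp^3) (- c3)"
  unfolding zz_def c3_def by (rule cg_idealI[of _ _ "0"]) algebra

lemma zr7: "cg p (Xp^7 - Xp^1) (- zz)"
  unfolding zz_def c3_def by (rule cg_idealI[of _ _ "0"]) algebra

lemma zr9: "cg p (Xp^9 - Xp^15) (- zz)"
  unfolding zz_def c3_def by (rule cg_idealI[of _ _ "(Xp^1 - Xp^7)"]) algebra

lemma zr11: "cg p (Xp^11 - Xp^13) (- c3)"
  unfolding zz_def c3_def by (rule cg_idealI[of _ _ "(Xp^3 - Xp^5)"]) algebra

lemma zr13: "cg p (Xp^13 - Xp^11) (c3)"
  unfolding zz_def c3_def by (rule cg_idealI[of _ _ "(0 - Xp^3 + Xp^5)"]) algebra

lemma zr15: "cg p (Xp^15 - Xp^9) (zz)"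
  unfolding zz_def c3_def by (rule cg_idealI[of _ _ "(0 - Xp^1 + Xp^7)"]) algebra

lemma wr3: "cg p (Xp^6 - Xp^2) (- ww)"
  unfolding ww_def by (rule cg_idealI[of _ _ "0"]) algebra

lemma wr5: "cg p (Xp^10 - Xp^14) (- ww)"
  unfolding ww_def by (rule cg_idealI[of _ _ "(Xp^2 - Xp^6)"]) algebra

lemma wr11: "cg p (Xp^6 - Xp^2) (- ww)"
  unfolding ww_def by (rule cg_idealI[of _ _ "0"]) algebra

lemma wr13: "cg p (Xp^10 - Xp^14) (- ww)"
  unfolding ww_def by (rule cg_idealI[of _ _ "(Xp^2 - Xp^6)"]) algebra


lemma r16: "(r::nat) < 16 \<Longrightarrow> odd r \<Longrightarrow> r = 1 \<or> r = 3 \<or> r = 5 \<or> r = 7 \<or> r = 9 \<or> r = 11 \<or> r = 13 \<or> r = 15"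
  by presburger

lemma Xpow_frob:
  assumes "prime p" "odd p"
  shows "cg p ((Xp^a - Xp^b)^p) (Xp^(a*p) - Xp^(b*p))"
proof -
  obtain h where h: "(Xp^a + - (Xp^b))^p = (Xp^a)^p + (- (Xp^b))^p + of_nat p * h"
    using frob[OF assms(1)] by blast
  then have "(Xp^a - Xp^b)^p - (Xp^(a*p) - Xp^(b*p)) = of_nat p * h"
    using assms(2) by (simp add: power_mult)
  then show ?thesis by (rule cg_pI)
qed

definition zc :: "nat \<Rightarrow> int poly" where
  "zc p = (if p mod 16 = 1 \<or> p mod 16 = 15 then zz else if p mod 16 = 7 \<or> p mod 16 = 9 then - zz
     else if p mod 16 = 3 \<or> p mod 16 = 13 then c3 else - c3)"

lemma zz_frob:
  assumes "prime p" "odd p"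
  shows "cg p (zz^p) (zc p)"
proof -
  have 1: "cg p (zz^p) (Xp^(1*p) - Xp^(7*p))"
    unfolding zz_def using Xpow_frob[OF assms, of 1 7] by simp
  have 2: "cg p (Xp^(1*p) - Xp^(7*p)) (Xp^(p mod 16) - Xp^(7*(p mod 16) mod 16))"
    using cg_diff[OF cg_Xmod cg_Xmod, of p "1*p" "7*p"] by (simp add: mod_mult_right_eq)
  have r: "p mod 16 < 16" "odd (p mod 16)" using assms(2) by (auto simp: odd_iff_mod_2_eq_one mod_mod_cancel)
  have 3: "cg p (Xp^(p mod 16) - Xp^(7*(p mod 16) mod 16)) (zc p)"
    using r16[OF r] zr1 zr3 zr5 zr7 zr9 zr11 zr13 zr15 unfolding zc_def
    by (elim disjE) (simp_all del: power_Suc)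
  show ?thesis using 1 2 3 cg_trans by blast
qed

lemma ww_frob:
  assumes "prime p" "odd p" "p mod 8 = 3 \<or> p mod 8 = 5"
  shows "cg p (ww^p) (- ww)"
proof -
  have 1: "cg p (ww^p) (Xp^(2*p) - Xp^(6*p))"
    unfolding ww_def using Xpow_frob[OF assms(1,2), of 2 6] by (simp add: mult.commute)
  have 2: "cg p (Xp^(2*p) - Xp^(6*p)) (Xp^(2*(p mod 16) mod 16) - Xp^(6*(p mod 16) mod 16))"
    using cg_diff[OF cg_Xmod cg_Xmod, of p "2*p" "6*p"] by (simp add: mod_mult_right_eq)
  have r: "p mod 16 < 16" "odd (p mod 16)" using assms(2) by (auto simp: odd_iff_mod_2_eq_one mod_mod_cancel)
  have m8: "p mod 8 = (p mod 16) mod 8" by (simp add: mod_mod_cancel)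
  have "p mod 16 = 3 \<or> p mod 16 = 5 \<or> p mod 16 = 11 \<or> p mod 16 = 13"
    using r16[OF r] assms(3) m8 by auto
  then have 3: "cg p (Xp^(2*(p mod 16) mod 16) - Xp^(6*(p mod 16) mod 16)) (- ww)"
    using wr3 wr5 wr11 wr13
    by (elim disjE) (simp_all del: power_Suc)
  show ?thesis using 1 2 3 cg_trans by blast
qed


lemma two_pow_poly: "(2::int poly)^m = [:2^m:]"
  by (simp add: numeral_poly poly_const_pow)

lemma ww_pow: "cg p (ww^k) (smult (2^(k div 2)) (ww^(k mod 2)))"
proof -
  have ke: "ww^k = ww^(2*(k div 2) + k mod 2)" by simp
  have e: "ww^k = (ww^2)^(k div 2) * ww^(k mod 2)"
    unfolding ke by (simp only: power_add power_mult)
  have "cg p ((ww^2)^(k div 2) * ww^(k mod 2)) (2^(k div 2) * ww^(k mod 2))"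
    by (intro cg_mult cg_pow ww2 cg_refl)
  then show ?thesis unfolding e two_pow_poly by simp
qed

lemma LL_ww: "LL ww = 1"
  unfolding ww_def LL_diff LL_Xpow by (simp add: ee_def)

lemma LL_1: "LL 1 = 0"
  by (simp add: LL_def ee_def)

lemma LL_2: "LL 2 = 0"
  by (simp add: numeral_poly LL_const)

definition Bsum :: "nat \<Rightarrow> int" where
  "Bsum n = (\<Sum>k\<le>n. if odd k then int (n choose k) * 2^(n-k) * 2^(k div 2) else 0)"

lemma LL_binom: "[LL ((2+ww)^n) = Bsum n] (mod int p)"
proof -
  have "(2+ww)^n = (ww+2)^n" by (simp add: add.commute)
  also have "\<dots> = (\<Sum>k\<le>n. of_nat (n choose k) * ww^k * 2^(n-k))"
    by (rule binomial_ring)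
  also have "\<dots> = (\<Sum>k\<le>n. smult (int (n choose k) * 2^(n-k)) (ww^k))"
    by (rule sum.cong) (auto simp: of_nat_poly two_pow_poly mult_ac)
  finally have e: "(2+ww)^n = (\<Sum>k\<le>n. smult (int (n choose k) * 2^(n-k)) (ww^k))" .
  have "cg p ((2+ww)^n) (\<Sum>k\<le>n. smult (2^(k div 2) * (int (n choose k) * 2^(n-k))) (ww^(k mod 2)))"
    unfolding e
  proof (rule cg_sum)
    fix k
    show "cg p (smult (int (n choose k) * 2 ^ (n - k)) (ww ^ k))
          (smult (2^(k div 2) * (int (n choose k) * 2^(n-k))) (ww^(k mod 2)))"
      using cg_mult_left[OF ww_pow[of p k], of "[:int (n choose k) * 2 ^ (n - k):]"] by simp
  qed
  from cg_LL[OF this] have "[LL ((2 + ww) ^ n) =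
     (\<Sum>k\<le>n. LL (smult (2^(k div 2) * (int (n choose k) * 2^(n-k))) (ww^(k mod 2))))] (mod int p)"
    by (simp add: LL_sum)
  also have "(\<Sum>k\<le>n. LL (smult (2^(k div 2) * (int (n choose k) * 2^(n-k))) (ww^(k mod 2)))) = Bsum n"
    unfolding Bsum_def
  proof (rule sum.cong)
    fix k
    show "LL (smult (2^(k div 2) * (int (n choose k) * 2^(n-k))) (ww^(k mod 2))) =
         (if odd k then int (n choose k) * 2 ^ (n - k) * 2 ^ (k div 2) else 0)"
    proof (cases "odd k")
      case True
      then have "k mod 2 = 1" by (simp add: odd_iff_mod_2_eq_one)
      then show ?thesis using True by (simp add: LL_smult LL_ww)
    next
      case False
      then have "k mod 2 = 0" by (simp add: even_iff_mod_2_eq_zero)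
      then show ?thesis using False by (simp add: LL_smult LL_1 LL_const)
    qed
  qed simp
  finally show ?thesis .
qed

definition RR :: "nat \<Rightarrow> int" where
  "RR p = (if p mod 16 = 1 \<or> p mod 16 = 15 \<or> p mod 16 = 7 \<or> p mod 16 = 9 then 0
     else if p mod 16 = 3 \<or> p mod 16 = 13 then 2 else -2)"

lemma poly_main:
  assumes "prime p" "odd p"
  shows "[2 * Bsum ((p - 1) div 2) = RR p] (mod int p)"
proof -
  define n where "n = (p - 1) div 2"
  define M where "M = zz * ww * (ww - 1)"
  obtain m where pm: "p = 2 * m + 1" using assms(2) by (rule oddE)
  have pn: "p = Suc (2 * n)" unfolding n_def using pm by simp
  have "zz^p = zz * (zz^2)^n" unfolding pn by (simp add: power_mult)
  moreover have "cg p (zz * (zz^2)^n) (zz * (2+ww)^n)" by (intro cg_mult cg_pow zz2 cg_refl)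
  ultimately have "cg p (zz * (2+ww)^n) (zc p)" using cg_trans[OF cg_sym zz_frob[OF assms]] by simp
  then have A1: "cg p (M * (zz * (2+ww)^n)) (M * zc p)" by (rule cg_mult_left)
  have A2: "M * (zz * (2+ww)^n) = (zz * M) * (2+ww)^n" by (simp add: mult_ac)
  have A3: "cg p ((zz * M) * (2+ww)^n) (2 * (2+ww)^n)" unfolding M_def by (intro cg_mult zM cg_refl)
  have A: "cg p (2 * (2+ww)^n) (zc p * M)"
    using cg_trans[OF cg_sym[OF A3] A1[unfolded A2]] by (simp add: mult.commute)
  have B: "[LL (2 * (2+ww)^n) = 2 * Bsum n] (mod int p)"
    using cong_scalar_left[OF LL_binom[of n p], of 2] by (simp add: numeral_poly LL_smult)
  have C: "[LL (zc p * M) = RR p] (mod int p)"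
  proof -
    have zM': "cg p (zz * M) 2" unfolding M_def using zM by (simp add: mult_ac)
    have c3M': "cg p (c3 * M) (2 * ww - 2)" unfolding M_def using c3M by (simp add: mult_ac)
    have LLc: "LL (2 * ww - 2) = 2" by (simp add: LL_diff LL_2 numeral_poly LL_smult LL_ww LL_const)
    have L1: "[LL (zz * M) = 0] (mod int p)" using cg_LL[OF zM'] by (simp add: LL_2)
    have L2: "[LL (- (zz * M)) = 0] (mod int p)" using cg_LL[OF cg_uminus[OF zM']] by (simp add: LL_2 LL_uminus)
    have L3: "[LL (c3 * M) = 2] (mod int p)" using cg_LL[OF c3M'] LLc by simp
    have L4: "[LL (- (c3 * M)) = -2] (mod int p)" using cg_LL[OF cg_uminus[OF c3M']] LLc LL_uminus[of "2 * ww - 2"] by simp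
    have r: "p mod 16 < 16" "odd (p mod 16)" using assms(2) by (auto simp: odd_iff_mod_2_eq_one mod_mod_cancel)
    show ?thesis using r16[OF r]
      by (elim disjE) (simp_all add: zc_def RR_def L1 L2 L3 L4)
  qed
  have "[2 * Bsum n = RR p] (mod int p)"
    using cong_trans[OF cong_sym[OF B] cong_trans[OF cg_LL[OF A] C]] .
  then show ?thesis unfolding n_def .
qed

lemma poly_two:
  assumes "prime p" "odd p" "p mod 8 = 3 \<or> p mod 8 = 5"
  shows "[2 ^ ((p - 1) div 2) = -1] (mod int p)"
proof -
  define n where "n = (p - 1) div 2"
  obtain m where pm: "p = 2 * m + 1" using assms(2) by (rule oddE)
  have pn: "p = Suc (2 * n)" unfolding n_def using pm by simp
  have "ww^p = ww * (ww^2)^n" unfolding pn by (simp add: power_mult)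
  moreover have "cg p (ww * (ww^2)^n) (ww * 2^n)" by (intro cg_mult cg_pow ww2 cg_refl)
  ultimately have "cg p (ww * 2^n) (- ww)" using cg_trans[OF cg_sym ww_frob[OF assms]] by simp
  from cg_LL[OF this] have "[2^n = -1] (mod int p)"
    by (simp add: two_pow_poly LL_uminus LL_ww LL_smult)
  then show ?thesis unfolding n_def .
qed

lemma coeffY: "coeff ([:1,1:]^n :: int poly) i = int (n choose i)"
proof (cases "i \<le> n")
  case True then show ?thesis by (simp add: coeff_linear_poly_power)
next
  case False
  have "degree ([:1,1:]^n :: int poly) \<le> n"
    using degree_power_le[of "[:1,1:] :: int poly" n] by simp
  then show ?thesis using False by (simp add: coeff_eq_0 binomial_eq_0)
qed

lemma lucas2:
  assumes "prime p" "m < p"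
  shows "[int ((2*p + 2*m) choose (p + m)) = 2 * int ((2*m) choose m)] (mod int p)"
proof -
  define Y :: "int poly" where "Y = [:1,1:]"
  have Y: "Y = monom 1 1 + 1" by (simp add: Y_def monom_Suc one_pCons)
  obtain h where h: "Y^p = (monom 1 1)^p + 1^p + of_nat p * h"
    using frob[OF assms(1), of "monom 1 1" "1 :: int poly"] unfolding Y by blast
  define u where "u = 1 + monom (1::int) p"
  have hu: "Y^p = u + of_nat p * h" unfolding h u_def by (simp add: monom_power)
  have "Y^(2*p + 2*m) = (Y^p)^2 * Y^(2*m)" by (simp add: power_add power_mult mult.commute)
  also have "\<dots> = u^2 * Y^(2*m) + of_nat p * ((2*u*h + of_nat p * h^2) * Y^(2*m))"
    unfolding hu by (simp add: algebra_simps power2_eq_square)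
  finally have e: "Y^(2*p + 2*m) = u^2 * Y^(2*m) + smult (int p) ((2*u*h + of_nat p * h^2) * Y^(2*m))"
    by (simp add: of_nat_poly)
  have PP: "monom (1::int) p + monom 1 p = smult 2 (monom 1 p)"
    using smult_add_left[of 1 1 "monom (1::int) p"] by simp
  have u2: "u^2 = 1 + smult 2 (monom 1 p) + monom 1 (2*p)"
  proof -
    have "u^2 = 1 + (monom 1 p + monom 1 p) + monom 1 p * monom 1 p"
      unfolding u_def power2_eq_square by (simp add: distrib_left distrib_right add.assoc)
    then show ?thesis by (simp only: PP mult_monom mult_2) simp
  qed
  have "coeff (u^2 * Y^(2*m)) (p+m) = coeff (Y^(2*m)) (p+m) + 2 * coeff (monom 1 p * Y^(2*m)) (p+m)
      + coeff (monom 1 (2*p) * Y^(2*m)) (p+m)"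
    unfolding u2 by (simp add: algebra_simps)
  also have "\<dots> = 2 * int ((2*m) choose m)"
    using assms(2) by (simp add: coeff_monom_mult coeffY binomial_eq_0 Y_def)
  finally have c: "coeff (u^2 * Y^(2*m)) (p+m) = 2 * int ((2*m) choose m)" .
  have "int ((2*p + 2*m) choose (p + m)) = coeff (Y^(2*p + 2*m)) (p+m)"
    unfolding Y_def coeffY ..
  also have "\<dots> = 2 * int ((2*m) choose m) + int p * coeff ((2*u*h + of_nat p * h^2) * Y^(2*m)) (p+m)"
    unfolding e using c by simp
  finally show ?thesis
    by (simp add: cong_iff_dvd_diff)
qed

lemma central_cong:
  assumes "prime p" "p = 2*n + 1" "m \<le> n"
  shows "[int ((2*m) choose m) = (-4)^m * int (n choose m)] (mod int p)"
  using assms(3)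
proof (induction m)
  case 0 then show ?case by simp
next
  case (Suc m)
  then have IH: "[int ((2*m) choose m) = (-4)^m * int (n choose m)] (mod int p)" by simp
  have R1: "Suc m * ((2 * Suc m) choose Suc m) = 2 * (2*m+1) * ((2*m) choose m)"
  proof -
    have t: "2 * Suc m = 2*m+2" by simp
    have R1': "Suc m * ((2*m+2) choose Suc m) = 2 * (2*m+1) * ((2*m) choose m)"
  proof -
    have a: "Suc m * ((2*m+2) choose Suc m) = (2*m+2) * ((2*m+1) choose m)"
      using binomial_absorption[of m "2*m+2"] by simp
    have b: "(m+1) * ((2*m+1) choose m) = (2*m+1) * ((2*m) choose m)"
      using binomial_absorb_comp[of "2*m+1" m] by simp
    have "Suc m * (Suc m * ((2*m+2) choose Suc m)) = Suc m * (2 * (2*m+1) * ((2*m) choose m))"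
      using a b by (simp add: algebra_simps)
    then show ?thesis by (simp only: mult_cancel_left) simp
  qed
    show ?thesis unfolding t by (rule R1')
  qed
  have R2: "Suc m * (n choose Suc m) = (n - m) * (n choose m)"
    using binomial_absorption[of m n] binomial_absorb_comp[of n m] by simp
  have "[int (Suc m) * int ((2 * Suc m) choose Suc m) = int (Suc m) * ((-4)^(Suc m) * int (n choose Suc m))] (mod int p)"
  proof -
    have L: "int (Suc m) * int ((2 * Suc m) choose Suc m) = int (2 * (2*m+1)) * int ((2*m) choose m)"
      by (simp only: of_nat_mult[symmetric] R1)
    have R: "int (Suc m) * ((-4)^(Suc m) * int (n choose Suc m)) = (-4)^m * (-4 * (int n - int m)) * int (n choose m)"
    proof -
      have R2': "int (Suc m) * int (n choose Suc m) = (int n - int m) * int (n choose m)"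
        using arg_cong[OF R2, of int] Suc.prems by (simp only: of_nat_mult of_nat_diff)
      have "int (Suc m) * ((-4)^(Suc m) * int (n choose Suc m)) = (-4)^(Suc m) * (int (Suc m) * int (n choose Suc m))"
        by (simp only: mult_ac)
      also have "\<dots> = (-4)^(Suc m) * ((int n - int m) * int (n choose m))" by (simp only: R2')
      also have "\<dots> = (-4)^m * (-4 * (int n - int m)) * int (n choose m)"
        by (simp only: power_Suc mult_ac)
      finally show ?thesis .
    qed
    have c1: "[int (2 * (2*m+1)) * int ((2*m) choose m) = int (2 * (2*m+1)) * ((-4)^m * int (n choose m))] (mod int p)"
      using IH by (simp add: cong_scalar_left)
    have t: "[(int (2 * (2*m+1))) = (-4 * (int n - int m))] (mod int p)"
    proof -
      have "(int (2 * (2*m+1))) - (-4 * (int n - int m)) = 2 * int p" using assms(2) by simp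
      then show ?thesis by (simp add: cong_iff_dvd_diff)
    qed
    have c2: "[int (2 * (2*m+1)) * ((-4)^m * int (n choose m)) = (-4 * (int n - int m)) * ((-4)^m * int (n choose m))] (mod int p)"
      using cong_scalar_right[OF t] .
    have eq: "(-4 * (int n - int m)) * ((-4)^m * int (n choose m)) = (-4)^m * (-4 * (int n - int m)) * int (n choose m)"
      by (simp only: mult_ac)
    show ?thesis unfolding L R using cong_trans[OF c1 c2] unfolding eq .
  qed
  moreover have "coprime (int (Suc m)) (int p)"
  proof -
    have "Suc m < p" using Suc.prems assms(2) by simp
    then have "\<not> p dvd Suc m" by (simp add: nat_dvd_not_less)
    then have "coprime p (Suc m)" using assms(1) by (simp add: prime_imp_coprime)
    then show ?thesis unfolding coprime_int_iff by (simp add: coprime_commute)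
  qed
  ultimately show ?case using cong_mult_lcancel by blast
qed

definition pint :: "nat \<Rightarrow> rat \<Rightarrow> bool" where
  "pint p x \<longleftrightarrow> (\<exists>a d::int. d \<noteq> 0 \<and> \<not> (int p dvd d) \<and> x = of_int a / of_int d)"

lemma nd_mult:
  assumes "prime p" "\<not> int p dvd d" "\<not> int p dvd e"
  shows "\<not> int p dvd (d * e)"
proof -
  have pr: "prime (int p)" using assms(1) by simp
  show ?thesis using prime_dvd_mult_iff[OF pr, of d e] assms(2,3) by blast
qed

lemma qc_refl: "prime p \<Longrightarrow> qcong a a p"
proof -
  assume "prime p"
  then have "p \<noteq> Suc 0" by auto
  then show ?thesis unfolding qcong_def by (intro exI[of _ 0] exI[of _ 1]) simp
qed

lemma qc_sym: "qcong a b p \<Longrightarrow> qcong b a p"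
  unfolding qcong_def
proof (elim exE conjE)
  fix m n :: int assume h: "n \<noteq> 0" "\<not> int p dvd n" "a - b = of_int (int p * m) / of_int n"
  have "b - a = - (a - b)" by simp
  also have "\<dots> = of_int (int p * (-m)) / of_int n" unfolding h(3) by simp
  finally have "b - a = of_int (int p * (-m)) / of_int n" .
  then show "\<exists>m n. n \<noteq> 0 \<and> \<not> int p dvd n \<and> b - a = of_int (int p * m) / of_int n"
    using h by blast
qed

lemma qc_add:
  assumes "prime p" "qcong a b p" "qcong c d p"
  shows "qcong (a + c) (b + d) p"
proof -
  obtain m n where 1: "n \<noteq> 0" "\<not> int p dvd n" "a - b = of_int (int p * m) / of_int n"
    using assms(2) unfolding qcong_def by blast
  obtain m' n' where 2: "n' \<noteq> 0" "\<not> int p dvd n'" "c - d = of_int (int p * m') / of_int n'"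
    using assms(3) unfolding qcong_def by blast
  have "(a + c) - (b + d) = (a - b) + (c - d)" by simp
  also have "\<dots> = of_int (int p * (m * n' + m' * n)) / of_int (n * n')"
    unfolding 1(3) 2(3) using 1(1) 2(1) by (simp add: field_simps)
  finally have e: "(a + c) - (b + d) = of_int (int p * (m * n' + m' * n)) / of_int (n * n')" .
  have "n * n' \<noteq> 0" "\<not> int p dvd (n * n')" using 1 2 nd_mult[OF assms(1)] by auto
  then show ?thesis unfolding qcong_def using e by blast
qed

lemma qc_trans:
  assumes "prime p" "qcong a b p" "qcong b c p"
  shows "qcong a c p"
  using qc_add[OF assms(1) qc_add[OF assms] qc_refl[OF assms(1), of "-b"]] by simp

lemma qc_uminus: "qcong a b p \<Longrightarrow> qcong (-a) (-b) p"
  unfolding qcong_def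
proof (elim exE conjE)
  fix m n :: int assume h: "n \<noteq> 0" "\<not> int p dvd n" "a - b = of_int (int p * m) / of_int n"
  have "-a - -b = - (a - b)" by simp
  also have "\<dots> = of_int (int p * (-m)) / of_int n" unfolding h(3) by simp
  finally have "-a - -b = of_int (int p * (-m)) / of_int n" .
  then show "\<exists>m n. n \<noteq> 0 \<and> \<not> int p dvd n \<and> -a - -b = of_int (int p * m) / of_int n"
    using h by blast
qed

lemma qc_sum:
  assumes "prime p" "\<And>i. i \<in> A \<Longrightarrow> qcong (f i) (g i) p"
  shows "qcong (\<Sum>i\<in>A. f i) (\<Sum>i\<in>A. g i) p"
  using assms(2) by (induction A rule: infinite_finite_induct) (auto intro: qc_add[OF assms(1)] qc_refl[OF assms(1)])

lemma qc_mult: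
  assumes "prime p" "qcong a b p" "pint p c"
  shows "qcong (c * a) (c * b) p"
proof -
  obtain m n where 1: "n \<noteq> 0" "\<not> int p dvd n" "a - b = of_int (int p * m) / of_int n"
    using assms(2) unfolding qcong_def by blast
  obtain x y where 2: "y \<noteq> 0" "\<not> int p dvd y" "c = of_int x / of_int y"
    using assms(3) unfolding pint_def by blast
  have "c * a - c * b = c * (a - b)" by (simp add: algebra_simps)
  also have "\<dots> = of_int (int p * (x * m)) / of_int (y * n)"
    unfolding 1(3) 2(3) using 1(1) 2(1) by (simp add: field_simps)
  finally have e: "c * a - c * b = of_int (int p * (x * m)) / of_int (y * n)" .
  have "y * n \<noteq> 0" "\<not> int p dvd (y * n)" using 1 2 nd_mult[OF assms(1)] by auto
  then show ?thesis unfolding qcong_def using e by blast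
qed

lemma pint_frac: "\<not> int p dvd d \<Longrightarrow> pint p (of_int a / of_int d)"
  unfolding pint_def by (rule exI[of _ a], rule exI[of _ d]) auto

lemma pint_int: "prime p \<Longrightarrow> pint p (of_int a)"
proof -
  assume "prime p"
  then have "\<not> int p dvd 1" by (metis not_prime_unit of_nat_1 int_dvd_int_iff dvd_1_iff_1)
  then show ?thesis using pint_frac[of p 1 a] by simp
qed

lemma pint_add:
  assumes "prime p" "pint p x" "pint p y"
  shows "pint p (x + y)"
proof -
  obtain a d where 1: "d \<noteq> 0" "\<not> int p dvd d" "x = of_int a / of_int d"
    using assms(2) unfolding pint_def by blast
  obtain b e where 2: "e \<noteq> 0" "\<not> int p dvd e" "y = of_int b / of_int e"
    using assms(3) unfolding pint_def by blast
  have "x + y = of_int (a * e + b * d) / of_int (d * e)"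
    unfolding 1(3) 2(3) using 1(1) 2(1) by (simp add: field_simps)
  moreover have "d * e \<noteq> 0" "\<not> int p dvd (d * e)" using 1 2 nd_mult[OF assms(1)] by auto
  ultimately show ?thesis unfolding pint_def by blast
qed

lemma pint_mult:
  assumes "prime p" "pint p x" "pint p y"
  shows "pint p (x * y)"
proof -
  obtain a d where 1: "d \<noteq> 0" "\<not> int p dvd d" "x = of_int a / of_int d"
    using assms(2) unfolding pint_def by blast
  obtain b e where 2: "e \<noteq> 0" "\<not> int p dvd e" "y = of_int b / of_int e"
    using assms(3) unfolding pint_def by blast
  have "x * y = of_int (a * b) / of_int (d * e)"
    unfolding 1(3) 2(3) using 1(1) 2(1) by (simp add: field_simps)
  moreover have "d * e \<noteq> 0" "\<not> int p dvd (d * e)" using 1 2 nd_mult[OF assms(1)] by auto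
  ultimately show ?thesis unfolding pint_def by blast
qed

lemma pint_sum:
  assumes "prime p" "\<And>i. i \<in> A \<Longrightarrow> pint p (f i)"
  shows "pint p (\<Sum>i\<in>A. f i)"
  using assms(2) by (induction A rule: infinite_finite_induct)
    (auto intro: pint_add[OF assms(1)] simp: pint_int[OF assms(1), of 0, simplified])

lemma qc_frac:
  assumes "prime p" "\<not> int p dvd d" "\<not> int p dvd e" "[a * e = b * d] (mod int p)"
  shows "qcong (of_int a / of_int d) (of_int b / of_int e) p"
proof -
  have d: "d \<noteq> 0" "e \<noteq> 0" using assms(2,3) by auto
  obtain m where m: "a * e - b * d = int p * m"
    using assms(4) by (metis cong_iff_dvd_diff dvdE)
  have "of_int a / of_int d - of_int b / of_int e = (of_int (a * e - b * d) :: rat) / of_int (d * e)"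
    using d by (simp add: field_simps)
  also have "\<dots> = of_int (int p * m) / of_int (d * e)" unfolding m ..
  finally have e: "of_int a / of_int d - of_int b / of_int e = (of_int (int p * m) :: rat) / of_int (d * e)" .
  have "d * e \<noteq> 0" "\<not> int p dvd (d * e)" using d nd_mult[OF assms(1-3)] by auto
  then show ?thesis unfolding qcong_def using e by blast
qed

lemma nd_pow2:
  assumes "prime p" "odd p"
  shows "\<not> int p dvd 2 ^ k"
proof
  assume "int p dvd 2 ^ k"
  moreover have "prime (int p)" using assms(1) by simp
  ultimately have "int p dvd 2" using prime_dvd_power by blast
  then have "int p \<le> 2" by (rule zdvd_imp_le) simp
  moreover have "p \<ge> 2" using assms(1) prime_ge_2_nat by blast
  ultimately have "p = 2" by simp
  then show False using assms(2) by simp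
qed

lemma sum_odd_reindex:
  "(\<Sum>i\<le>(n::nat). if odd i then f i else 0) = (\<Sum>k=1..(n+1) div 2. f (2*k - 1))"
proof (induction n)
  case 0 then show ?case by simp
next
  case (Suc n)
  show ?case
  proof (cases "odd (Suc n)")
    case True
    then have e: "(Suc n + 1) div 2 = Suc ((n + 1) div 2)" by presburger
    have e2: "2 * Suc ((n + 1) div 2) - 1 = Suc n" using True by presburger
    show ?thesis using Suc True by (simp add: e e2)
  next
    case False
    then have e: "(Suc n + 1) div 2 = (n + 1) div 2" by presburger
    show ?thesis using Suc False by (simp add: e)
  qed
qed

lemma cancel2:
  assumes "prime p" "odd p" "[2 * b = 2 * c] (mod int p)"
  shows "[b = c] (mod int p)"
proof -
  have pr: "prime (int p)" using assms(1) by simp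
  have "int p dvd 2 * (b - c)" using assms(3) by (simp add: cong_iff_dvd_diff algebra_simps)
  then have "int p dvd 2 \<or> int p dvd (b - c)" using prime_dvd_mult_iff[OF pr] by blast
  moreover have "\<not> int p dvd 2" using nd_pow2[OF assms(1,2), of 1] by simp
  ultimately show ?thesis by (simp add: cong_iff_dvd_diff)
qed

lemma mod16_cases:
  fixes p :: nat
  assumes "odd p"
  shows "(p mod 8 = 1 \<or> p mod 8 = 7) \<longleftrightarrow> (p mod 16 = 1 \<or> p mod 16 = 15 \<or> p mod 16 = 7 \<or> p mod 16 = 9)"
    and "(p mod 8 = 3 \<or> p mod 8 = 5) \<longleftrightarrow> (p mod 16 = 3 \<or> p mod 16 = 13 \<or> p mod 16 = 5 \<or> p mod 16 = 11)"
    and "p mod 8 = 1 \<or> p mod 8 = 7 \<or> p mod 8 = 3 \<or> p mod 8 = 5"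
  using assms by presburger+

theorem corollary3p4:
  fixes p :: nat
  assumes "prime p" and "odd p"
  defines "S1 \<equiv> (\<Sum>k = (p+1) div 2 .. (3*p) div 4. of_nat ((4*k) choose (2*k)) / (32::rat)^k)"
      and "S2 \<equiv> (\<Sum>k = 1 .. (p+1) div 4. of_nat ((4*k-2) choose (2*k-1)) / (32::rat)^k)"
  shows "qcong (2 * S1) (-4 * S2) p
     \<and> ((p mod 8 = 1 \<or> p mod 8 = 7) \<longrightarrow> qcong (-4 * S2) 0 p)
     \<and> ((p mod 16 = 5 \<or> p mod 16 = 11) \<longrightarrow> qcong (-4 * S2) 1 p)
     \<and> ((p mod 16 = 3 \<or> p mod 16 = 13) \<longrightarrow> qcong (-4 * S2) (-1) p)"
proof -
  have pr: "prime p" by (rule assms(1))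
  have p2: "p \<ge> 2" using pr prime_ge_2_nat by blast
  define n where "n = (p - 1) div 2"
  define K where "K = (p + 1) div 4"
  obtain t where pt: "p = 2 * t + 1" using assms(2) by (rule oddE)
  have pn: "p = 2 * n + 1" unfolding n_def using pt by simp
  have n1: "n \<ge> 1" using pn p2 assms(2) by (cases n) auto
  have Kn: "2 * K \<le> n + 1" unfolding K_def pn by linarith
  have Kn2: "K = (n + 1) div 2" unfolding K_def pn by linarith
  have nd: "\<And>k. \<not> int p dvd 2 ^ k" using nd_pow2[OF assms(1,2)] .
  have nd32: "\<And>k. \<not> int p dvd 32 ^ k"
  proof -
    fix k
    have "(32::int)^k = 2^(5*k)" by (simp add: power_mult)
    then show "\<not> int p dvd 32 ^ k" using nd by simp
  qed
  have nd1: "\<not> int p dvd 1" using nd[of 0] by simp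
  have KnK: "\<And>k. k \<in> {1..K} \<Longrightarrow> 2*k - 1 \<le> n \<and> k \<le> n \<and> 1 \<le> k" using Kn n1 by auto
  define T where "T = (\<Sum>k=1..K. of_int (int (n choose (2*k-1))) / of_int (2^k) :: rat)"
  have S2e: "-4 * S2 = (\<Sum>k=1..K. of_int (-4 * int ((4*k-2) choose (2*k-1))) / of_int (32^k))"
    unfolding S2_def K_def by (simp add: sum_distrib_left)
  have step1: "qcong (-4*S2) T p"
    unfolding S2e T_def
  proof (rule qc_sum[OF pr])
    fix k assume k: "k \<in> {1..K}"
    define m where "m = 2*k-1"
    have mn: "m \<le> n" using KnK[OF k] m_def by simp
    have k1: "k \<ge> 1" using KnK[OF k] by simp
    have e1: "4*k-2 = 2*m" unfolding m_def using k1 by simp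
    have cc: "[int ((2*m) choose m) = (-4)^m * int (n choose m)] (mod int p)" by (rule central_cong[OF pr pn mn])
    have pw: "(-4::int) * (-4)^m * 2^k = 32^k"
    proof -
      have sm: "Suc m = 2 * k" unfolding m_def using k1 by simp
      have "(-4::int) * (-4)^m = (-4)^(Suc m)" by simp
      also have "\<dots> = 16^k" unfolding sm by (simp add: power_mult)
      finally have "(-4::int) * (-4)^m * 2^k = 16^k * 2^k" by simp
      also have "\<dots> = 32^k" by (simp flip: power_mult_distrib)
      finally show ?thesis .
    qed
    show "qcong (of_int (-4 * int ((4*k-2) choose (2*k-1))) / of_int (32^k)) (of_int (int (n choose (2*k-1))) / of_int (2^k)) p"
    proof (rule qc_frac[OF pr nd32 nd])
      have "[-4 * int ((4*k-2) choose (2*k-1)) * 2^k = -4 * ((-4)^m * int (n choose m)) * 2^k] (mod int p)"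
        unfolding e1 m_def[symmetric] by (intro cong_mult cc cong_refl)
      also have "-4 * ((-4)^m * int (n choose m)) * 2^k = int (n choose m) * ((-4) * (-4)^m * 2^k)"
        by (simp only: mult_ac)
      also have "\<dots> = int (n choose m) * 32^k" unfolding pw ..
      finally show "[-4 * int ((4*k-2) choose (2*k-1)) * 2^k = int (n choose (2*k-1)) * 32^k] (mod int p)"
        unfolding m_def .
    qed
  qed
  have BsumK: "Bsum n = (\<Sum>k=1..K. int (n choose (2*k-1)) * 2^(n-k))"
    unfolding Bsum_def sum_odd_reindex Kn2[symmetric]
  proof (rule sum.cong)
    fix k assume k: "k \<in> {1..K}"
    have a: "(2*k-1) div 2 = k - 1" using KnK[OF k] by linarith
    have b: "n - (2*k-1) + (k-1) = n - k" using KnK[OF k] by linarith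
    show "int (n choose (2*k-1)) * 2^(n - (2*k-1)) * 2^((2*k-1) div 2) = int (n choose (2*k-1)) * 2^(n-k)"
      unfolding a by (simp add: mult.assoc flip: power_add b)
  qed simp
  have step2: "T = of_int (Bsum n) / of_int (2^n)"
  proof -
    have "T * 2^n = (\<Sum>k=1..K. of_int (int (n choose (2*k-1))) / of_int (2^k) * (2::rat)^n)"
      unfolding T_def by (simp add: sum_distrib_right)
    also have "\<dots> = (\<Sum>k=1..K. of_int (int (n choose (2*k-1)) * 2^(n-k)))"
    proof (rule sum.cong)
      fix k assume k: "k \<in> {1..K}"
      have "(2::rat)^n = 2^k * 2^(n-k)" using KnK[OF k] by (simp flip: power_add)
      then show "of_int (int (n choose (2*k-1))) / of_int (2^k) * (2::rat)^n = of_int (int (n choose (2*k-1)) * 2^(n-k))"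
        by simp
    qed simp
    also have "\<dots> = of_int (Bsum n)" unfolding BsumK by simp
    finally show ?thesis by (simp add: field_simps)
  qed
  have PM: "[2 * Bsum n = RR p] (mod int p)" using poly_main[OF assms(1,2)] unfolding n_def .
  define c where "c = (of_int (-1) / of_int (32^n) :: rat)"
  have pc: "pint p c" unfolding c_def by (rule pint_frac[OF nd32])
  have pY: "pint p (-4 * S2)" unfolding S2e by (rule pint_sum[OF pr]) (rule pint_frac[OF nd32])
  have r1: "(p+1) div 2 = 1 + n" unfolding pn by simp
  have r2: "(3*p) div 4 = K + n" unfolding K_def pn by presburger
  have step4: "qcong (2*S1) (c * (-4*S2)) p"
  proof -
    have "S1 = (\<Sum>j=1..K. of_nat ((4*(j+n)) choose (2*(j+n))) / (32::rat)^(j+n))"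
      unfolding S1_def r1 r2 by (rule sum.shift_bounds_cl_nat_ivl)
    then have e: "2*S1 = (\<Sum>j=1..K. of_int (2 * int ((4*(j+n)) choose (2*(j+n)))) / of_int (32^(j+n)))"
      by (simp add: sum_distrib_left)
    have e2: "c * (-4*S2) = (\<Sum>j=1..K. of_int (4 * int ((4*j-2) choose (2*j-1))) / of_int (32^(j+n)))"
      unfolding c_def S2e by (simp add: sum_distrib_left power_add mult.commute)
    show ?thesis unfolding e e2
    proof (rule qc_sum[OF pr])
      fix j assume j: "j \<in> {1..K}"
      define m where "m = 2*j-1"
      have mp: "m < p" using KnK[OF j] pn m_def by simp
      have j1: "j \<ge> 1" using KnK[OF j] by simp
      have e3: "4*(j+n) = 2*p + 2*m" "2*(j+n) = p + m" "4*j-2 = 2*m" unfolding m_def pn using j1 by auto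
      have l: "[int ((2*p + 2*m) choose (p + m)) = 2 * int ((2*m) choose m)] (mod int p)"
        by (rule lucas2[OF pr mp])
      show "qcong (of_int (2 * int ((4*(j+n)) choose (2*(j+n)))) / of_int (32^(j+n)))
                  (of_int (4 * int ((4*j-2) choose (2*j-1))) / of_int (32^(j+n))) p"
      proof (rule qc_frac[OF pr nd32 nd32])
        have "[2 * int ((2*p + 2*m) choose (p + m)) = 2 * (2 * int ((2*m) choose m))] (mod int p)"
          using l by (rule cong_scalar_left)
        then have "[2 * int ((2*p + 2*m) choose (p + m)) = 4 * int ((2*m) choose m)] (mod int p)" by simp
        then show "[2 * int ((4*(j+n)) choose (2*(j+n))) * 32^(j+n) = 4 * int ((4*j-2) choose (2*j-1)) * 32^(j+n)] (mod int p)"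
          unfolding e3 m_def[symmetric] by (rule cong_scalar_right)
      qed
    qed
  qed
  have T0: "(p mod 8 = 1 \<or> p mod 8 = 7) \<Longrightarrow> qcong T 0 p"
  proof -
    assume h: "p mod 8 = 1 \<or> p mod 8 = 7"
    then have "RR p = 0" unfolding RR_def using mod16_cases(1)[OF assms(2)] by auto
    then have "[Bsum n = 0] (mod int p)" using cancel2[OF assms(1,2), of "Bsum n" 0] PM by simp
    then have "qcong (of_int (Bsum n) / of_int (2^n)) (of_int 0 / of_int 1) p"
      by (intro qc_frac[OF pr nd nd1]) simp
    then show ?thesis unfolding step2 by simp
  qed
  have two: "(p mod 8 = 3 \<or> p mod 8 = 5) \<Longrightarrow> [2 ^ n = -1] (mod int p)"
    using poly_two[OF assms(1,2)] unfolding n_def by blast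
  have T1: "(p mod 16 = 5 \<or> p mod 16 = 11) \<Longrightarrow> qcong T 1 p"
  proof -
    assume h: "p mod 16 = 5 \<or> p mod 16 = 11"
    then have "RR p = 2 * (-1)" unfolding RR_def by auto
    then have B: "[Bsum n = -1] (mod int p)" using cancel2[OF assms(1,2), of "Bsum n" "-1"] PM by simp
    have "p mod 8 = 3 \<or> p mod 8 = 5" using h mod16_cases(2)[OF assms(2)] by auto
    then have t: "[2^n = -1] (mod int p)" using two by blast
    have "[Bsum n = 2^n] (mod int p)" using cong_trans[OF B cong_sym[OF t]] .
    then have "[Bsum n * 1 = 1 * 2^n] (mod int p)" by simp
    then have "qcong (of_int (Bsum n) / of_int (2^n)) (of_int 1 / of_int 1) p"
      by (intro qc_frac[OF pr nd nd1])
    then show ?thesis unfolding step2 by simp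
  qed
  have Tm1: "(p mod 16 = 3 \<or> p mod 16 = 13) \<Longrightarrow> qcong T (-1) p"
  proof -
    assume h: "p mod 16 = 3 \<or> p mod 16 = 13"
    then have "RR p = 2 * 1" unfolding RR_def by auto
    then have B: "[Bsum n = 1] (mod int p)" using cancel2[OF assms(1,2), of "Bsum n" "1"] PM by simp
    have "p mod 8 = 3 \<or> p mod 8 = 5" using h mod16_cases(2)[OF assms(2)] by auto
    then have t: "[2^n = -1] (mod int p)" using two by blast
    have "[(- ((2::int)^n)) = 1] (mod int p)" using cong_minus_minus_iff[of "(2::int)^n" "-1" "int p"] t by simp
    then have "[Bsum n = - (2^n)] (mod int p)" using cong_trans[OF B cong_sym] by blast
    then have "[Bsum n * 1 = (-1) * 2^n] (mod int p)" by simp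
    then have "qcong (of_int (Bsum n) / of_int (2^n)) (of_int (-1) / of_int 1) p"
      by (intro qc_frac[OF pr nd nd1])
    then show ?thesis unfolding step2 by simp
  qed
  have first: "qcong (2 * S1) (-4 * S2) p"
  proof (cases "p mod 8 = 1 \<or> p mod 8 = 7")
    case True
    have Y0: "qcong (-4*S2) 0 p" using qc_trans[OF pr step1 T0[OF True]] .
    have "qcong (c * (-4*S2)) (c * 0) p" by (rule qc_mult[OF pr Y0 pc])
    then have "qcong (2*S1) 0 p" using qc_trans[OF pr step4] by simp
    then show ?thesis using qc_trans[OF pr _ qc_sym[OF Y0]] by blast
  next
    case False
    then have "p mod 8 = 3 \<or> p mod 8 = 5" using mod16_cases(3)[OF assms(2)] by blast
    then have t: "[2^n = -1] (mod int p)" using two by blast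
    have "[(2::int)^(n*5) = (-1)^5] (mod int p)" unfolding power_mult by (rule cong_pow[OF t])
    moreover have "(2::int)^(n*5) = 32^n"
    proof -
      have "(2::int)^(n*5) = (2^5)^n" by (simp only: power_mult[symmetric] mult.commute)
      then show ?thesis by simp
    qed
    ultimately have "[(-1) * 1 = 1 * (32::int)^n] (mod int p)" by (simp add: cong_sym)
    then have "qcong c (of_int 1 / of_int 1) p" unfolding c_def by (rule qc_frac[OF pr nd32 nd1])
    then have c1: "qcong c 1 p" by simp
    have "qcong ((-4*S2) * c) ((-4*S2) * 1) p" by (rule qc_mult[OF pr c1 pY])
    then have "qcong (c * (-4*S2)) (-4*S2) p" by (simp add: mult.commute)
    then show ?thesis using qc_trans[OF pr step4] by blast
  qed
  show ?thesis using first qc_trans[OF pr step1] T0 T1 Tm1 by blast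
qed

end
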